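(* Let $P$ be the transition matrix of an irreducible, reversible and transitive Markov chain on a finite state space $\Omega$. Let $\lambda_Y,\lambda_Z\ge0$ and let $X,Y,Z$ be independent continuous-time Markov chains with transition matrix $P$ and speeds $\lambda_X=1$, $\lambda_Y$, $\lambda_Z$ respectively. Let $\tau^X_z=\inf\{t\ge0:X_t=z\}$ and $M^{Y,Z}=\inf\{t\ge0:Y_t=Z_t\}$. Then for all $(x,z)\in\Omega^2$ the distribution of $\tau^X_z/(\lambda_Y+\lambda_Z)$ when $X_0=x$ equals the distribution of $M^{Y,Z}$ when $(Y_0,Z_0)=(x,z)$; that is, for all $t\ge0$, \[\mathbb P_x\big(\tau^X_z\le(\lambda_Y+\lambda_Z)t\big)=\mathbb P_{(x,z)}\big(M^{Y,Z}\le t\big).\]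
   Context: A continuous-time chain with speed $\lambda$ and transition matrix $P$ jumps at rate $\lambda$ according to $P$ (generator $\lambda(P-I)$). An automorphism of $P$ is a bijection $\phi:\Omega\to\Omega$ with $P(z,w)=P(\phi(z),\phi(w))$ for all $z,w$; $P$ is transitive if for all $x,y$ there is an automorphism $\phi$ with $\phi(x)=y$. $\mathbb P_x$ refers to $X_0=x$ and $\mathbb P_{(x,z)}$ to $(Y_0,Z_0)=(x,z)$. *)

theory Defs
  imports "HOL-Probability.Probability"
begin

definition stochastic_matrix :: "('a::finite \<Rightarrow> 'a \<Rightarrow> real) \<Rightarrow> bool" where
  "stochastic_matrix P \<longleftrightarrow> (\<forall>x y. P x y \<ge> 0) \<and> (\<forall>x. (\<Sum>y\<in>UNIV. P x y) = 1)"

fun matpow :: "('a::finite \<Rightarrow> 'a \<Rightarrow> real) \<Rightarrow> nat \<Rightarrow> 'a \<Rightarrow> 'a \<Rightarrow> real" where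
  "matpow P 0 = (\<lambda>x y. if x = y then 1 else 0)"
| "matpow P (Suc n) = (\<lambda>x y. \<Sum>w\<in>UNIV. matpow P n x w * P w y)"

definition irreducible_chain :: "('a::finite \<Rightarrow> 'a \<Rightarrow> real) \<Rightarrow> bool" where
  "irreducible_chain P \<longleftrightarrow> (\<forall>x y. \<exists>n. matpow P n x y > 0)"

definition reversible_chain :: "('a::finite \<Rightarrow> 'a \<Rightarrow> real) \<Rightarrow> bool" where
  "reversible_chain P \<longleftrightarrow> (\<exists>\<pi>. (\<forall>x. \<pi> x > 0) \<and> (\<Sum>x\<in>UNIV. \<pi> x) = 1 \<and>
      (\<forall>x y. \<pi> x * P x y = \<pi> y * P y x))"

definition automorphism :: "('a \<Rightarrow> 'a \<Rightarrow> real) \<Rightarrow> ('a \<Rightarrow> 'a) \<Rightarrow> bool" where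
  "automorphism P \<phi> \<longleftrightarrow> bij \<phi> \<and> (\<forall>z w. P z w = P (\<phi> z) (\<phi> w))"

definition transitive_chain :: "('a \<Rightarrow> 'a \<Rightarrow> real) \<Rightarrow> bool" where
  "transitive_chain P \<longleftrightarrow> (\<forall>x y. \<exists>\<phi>. automorphism P \<phi> \<and> \<phi> x = y)"

text \<open>Transition function of the continuous-time chain with speed lam and transition matrix P,
  i.e. exp(t lam (P - I)) = exp(-lam t) * sum_n (lam t)^n/n! P^n.\<close>
definition heat_kernel :: "real \<Rightarrow> ('a::finite \<Rightarrow> 'a \<Rightarrow> real) \<Rightarrow> real \<Rightarrow> 'a \<Rightarrow> 'a \<Rightarrow> real" where
  "heat_kernel lam P t x y = exp (- lam * t) * (\<Sum>n. (lam * t) ^ n / fact n * matpow P n x y)"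

text \<open>X is a continuous-time Markov chain on the probability space M, with speed lam,
  transition matrix P, started at x0: coordinates are random variables, paths are
  right-continuous (state space discrete), and the finite-dimensional distributions
  are those of the chain with generator lam (P - I).\<close>
definition ctmc :: "'w measure \<Rightarrow> ('w \<Rightarrow> real \<Rightarrow> 'a::finite) \<Rightarrow> real \<Rightarrow> ('a \<Rightarrow> 'a \<Rightarrow> real) \<Rightarrow> 'a \<Rightarrow> bool" where
  "ctmc M X lam P x0 \<longleftrightarrow>
     prob_space M \<and>
     (\<forall>t. (\<lambda>\<omega>. X \<omega> t) \<in> measurable M (count_space UNIV)) \<and>
     (\<forall>\<omega>\<in>space M. \<forall>t\<ge>0. eventually (\<lambda>s. X \<omega> s = X \<omega> t) (at_right t)) \<and>
     (\<forall>(n::nat) (tt::nat \<Rightarrow> real) (s::nat \<Rightarrow> 'a).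
        tt 0 = 0 \<and> (\<forall>i<n. tt i \<le> tt (Suc i)) \<longrightarrow>
        measure M {\<omega>\<in>space M. \<forall>i\<le>n. X \<omega> (tt i) = s i}
          = (if s 0 = x0 then 1 else 0) *
            (\<Prod>i<n. heat_kernel lam P (tt (Suc i) - tt i) (s i) (s (Suc i))))"

text \<open>Hitting time of z (infimum over [0,oo), value oo if never hit).\<close>
definition hitting_time :: "('w \<Rightarrow> real \<Rightarrow> 'a) \<Rightarrow> 'a \<Rightarrow> 'w \<Rightarrow> ereal" where
  "hitting_time X z \<omega> = Inf (ereal ` {t. 0 \<le> t \<and> X \<omega> t = z})"

definition meeting_time :: "('w \<Rightarrow> real \<Rightarrow> 'a) \<Rightarrow> ('w \<Rightarrow> real \<Rightarrow> 'a) \<Rightarrow> 'w \<Rightarrow> ereal" where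
  "meeting_time Y Z \<omega> = Inf (ereal ` {t. 0 \<le> t \<and> Y \<omega> t = Z \<omega> t})"

abbreviation path_space :: "(real \<Rightarrow> 'a) measure" where
  "path_space \<equiv> Pi\<^sub>M UNIV (\<lambda>_. count_space UNIV)"

end

theory Submission
  imports Defs
begin


definition mmul :: "('a::finite \<Rightarrow> 'a \<Rightarrow> real) \<Rightarrow> ('a \<Rightarrow> 'a \<Rightarrow> real) \<Rightarrow> 'a \<Rightarrow> 'a \<Rightarrow> real" where
  "mmul M N = (\<lambda>a b. \<Sum>w\<in>UNIV. M a w * N w b)"

lemma mmul_assoc: "mmul (mmul A B) C = mmul A (mmul B C)"
proof (intro ext)
  fix a b
  have "mmul (mmul A B) C a b = (\<Sum>w\<in>UNIV. \<Sum>v\<in>UNIV. A a v * B v w * C w b)"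
    by (simp add: mmul_def sum_distrib_right)
  also have "\<dots> = (\<Sum>v\<in>UNIV. \<Sum>w\<in>UNIV. A a v * B v w * C w b)" by (rule sum.swap)
  also have "\<dots> = mmul A (mmul B C) a b" by (simp add: mmul_def sum_distrib_left mult.assoc)
  finally show "mmul (mmul A B) C a b = mmul A (mmul B C) a b" .
qed

lemma mmul_id_right: "mmul A (\<lambda>x y. if x = y then 1 else 0) = A"
  unfolding mmul_def by (intro ext) (simp add: if_distrib cong: if_cong)

lemma mmul_id_left: "mmul (\<lambda>x y. if x = y then 1 else 0) A = A"
proof (intro ext)
  fix a b
  have "(\<Sum>w\<in>UNIV. (if a = w then 1 else 0) * A w b) = (\<Sum>w\<in>UNIV. if a = w then A w b else 0)"
    by (rule sum.cong) auto
  then show "mmul (\<lambda>x y. if x = y then 1 else 0) A a b = A a b" by (simp add: mmul_def)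
qed

lemma matpow_Suc': "matpow P (Suc n) = mmul (matpow P n) P"
  by (simp add: mmul_def)

lemma matpow_add: "matpow P (m + n) = mmul (matpow P m) (matpow P n)"
proof (induction n)
  case 0
  then show ?case by (simp add: mmul_id_right)
next
  case (Suc n)
  then show ?case by (simp only: add_Suc_right matpow_Suc' mmul_assoc)
qed

lemma matpow_one: "matpow P 1 = P"
  by (simp add: matpow_Suc'[of P 0, simplified] mmul_id_left)

lemma matpow_nonneg: "stochastic_matrix P \<Longrightarrow> matpow P n x y \<ge> 0"
  by (induction n arbitrary: y) (auto simp: stochastic_matrix_def intro!: sum_nonneg)

lemma matpow_rowsum: "stochastic_matrix P \<Longrightarrow> (\<Sum>y\<in>UNIV. matpow P n x y) = 1"
proof (induction n)
  case 0
  then show ?case by simp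
next
  case (Suc n)
  have "(\<Sum>y\<in>UNIV. matpow P (Suc n) x y) = (\<Sum>w\<in>UNIV. matpow P n x w * (\<Sum>y\<in>UNIV. P w y))"
    by (simp add: sum_distrib_left) (rule sum.swap)
  also have "\<dots> = 1" using Suc by (simp add: stochastic_matrix_def)
  finally show ?case .
qed

lemma matpow_le1: "stochastic_matrix P \<Longrightarrow> matpow P n x y \<le> 1"
proof -
  assume s: "stochastic_matrix P"
  have "matpow P n x y \<le> (\<Sum>y\<in>UNIV. matpow P n x y)"
    by (rule member_le_sum) (auto simp: matpow_nonneg[OF s])
  then show ?thesis using matpow_rowsum[OF s] by simp
qed

lemma matpow_sym: assumes "\<And>x y. P x y = P y x" shows "matpow P n x y = matpow P n y x"
proof (induction n arbitrary: x y)
  case 0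
  then show ?case by auto
next
  case (Suc n)
  have "matpow P (Suc n) x y = matpow P (1 + n) x y" by simp
  also have "\<dots> = (\<Sum>w\<in>UNIV. P x w * matpow P n w y)" by (simp only: matpow_add matpow_one) (simp add: mmul_def)
  also have "\<dots> = (\<Sum>w\<in>UNIV. matpow P n y w * P w x)" using Suc assms by (simp add: mult.commute)
  finally show ?case by simp
qed

lemma bij_sum_reindex: "bij (\<phi>::'a::finite \<Rightarrow> 'a) \<Longrightarrow> (\<Sum>w\<in>UNIV. f (\<phi> w)) = (\<Sum>w\<in>UNIV. (f w :: real))"
  by (metis bij_def sum.reindex_cong)

definition invm :: "('a \<Rightarrow> 'a \<Rightarrow> real) \<Rightarrow> ('a \<Rightarrow> 'a \<Rightarrow> real) \<Rightarrow> bool" where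
  "invm P M \<longleftrightarrow> (\<forall>\<phi>. automorphism P \<phi> \<longrightarrow> (\<forall>a b. M (\<phi> a) (\<phi> b) = M a b))"

lemma invm_mmul: "invm P M \<Longrightarrow> invm P N \<Longrightarrow> invm P (mmul M N)"
  unfolding invm_def mmul_def
proof (intro allI impI)
  fix \<phi> a b assume M: "\<forall>\<phi>. automorphism P \<phi> \<longrightarrow> (\<forall>a b. M (\<phi> a) (\<phi> b) = M a b)"
    and N: "\<forall>\<phi>. automorphism P \<phi> \<longrightarrow> (\<forall>a b. N (\<phi> a) (\<phi> b) = N a b)" and au: "automorphism P \<phi>"
  have b: "bij \<phi>" using au by (simp add: automorphism_def)
  have "(\<Sum>w\<in>UNIV. M (\<phi> a) w * N w (\<phi> b)) = (\<Sum>w\<in>UNIV. M (\<phi> a) (\<phi> w) * N (\<phi> w) (\<phi> b))"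
    using bij_sum_reindex[OF b, of "\<lambda>w. M (\<phi> a) w * N w (\<phi> b)"] by simp
  also have "\<dots> = (\<Sum>w\<in>UNIV. M a w * N w b)" using M N au by simp
  finally show "(\<Sum>w\<in>UNIV. M (\<phi> a) w * N w (\<phi> b)) = (\<Sum>w\<in>UNIV. M a w * N w b)" .
qed

lemma invm_P: "invm P P"
  unfolding invm_def automorphism_def by auto

lemma invm_matpow: "invm P (matpow P n)"
proof (induction n)
  case 0
  then show ?case unfolding invm_def automorphism_def by (auto simp: bij_def inj_eq)
next
  case (Suc n)
  then show ?case by (simp only: matpow_Suc' invm_mmul invm_P)
qed

definition E :: "('a::finite \<Rightarrow> 'a \<Rightarrow> real) \<Rightarrow> real \<Rightarrow> 'a \<Rightarrow> 'a \<Rightarrow> real" where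
  "E P s x y = exp (- s) * (\<Sum>n. s ^ n / fact n * matpow P n x y)"

lemma heat_kernel_E: "heat_kernel lam P t = E P (lam * t)"
  unfolding heat_kernel_def E_def by (intro ext) simp

lemma E_summable_norm:
  assumes "stochastic_matrix P"
  shows "summable (\<lambda>n. norm (s ^ n / fact n * matpow P n x y))"
proof (rule summable_comparison_test[OF _ summable_exp[of "\<bar>s\<bar>"]])
  show "\<exists>N. \<forall>n\<ge>N. norm (norm (s ^ n / fact n * matpow P n x y)) \<le> inverse (fact n) * \<bar>s\<bar> ^ n"
  proof (intro exI allI impI)
    fix n :: nat
    have "norm (norm (s ^ n / fact n * matpow P n x y)) = \<bar>s\<bar> ^ n / fact n * matpow P n x y"
      using matpow_nonneg[OF assms] by (simp add: abs_mult power_abs)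
    also have "\<dots> \<le> \<bar>s\<bar> ^ n / fact n * 1"
      by (intro mult_left_mono matpow_le1[OF assms]) auto
    finally show "norm (norm (s ^ n / fact n * matpow P n x y)) \<le> inverse (fact n) * \<bar>s\<bar> ^ n"
      by (simp add: divide_inverse mult.commute)
  qed
qed

lemma E_summable: "stochastic_matrix P \<Longrightarrow> summable (\<lambda>n. s ^ n / fact n * matpow P n x y)"
  by (rule summable_norm_cancel[OF E_summable_norm])

lemma E_rowsum:
  assumes "stochastic_matrix P"
  shows "(\<Sum>y\<in>UNIV. E P s x y) = 1"
proof -
  have "(\<Sum>y\<in>UNIV. (\<Sum>n. s ^ n / fact n * matpow P n x y)) = (\<Sum>n. \<Sum>y\<in>UNIV. s ^ n / fact n * matpow P n x y)"
    by (rule suminf_sum[symmetric]) (rule E_summable[OF assms])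
  also have "\<dots> = (\<Sum>n. s ^ n / fact n)"
  proof (intro suminf_cong)
    fix n
    have "(\<Sum>y\<in>UNIV. s ^ n / fact n * matpow P n x y) = s ^ n / fact n * (\<Sum>y\<in>UNIV. matpow P n x y)"
      by (rule sum_distrib_left[symmetric])
    then show "(\<Sum>y\<in>UNIV. s ^ n / fact n * matpow P n x y) = s ^ n / fact n"
      by (simp only: matpow_rowsum[OF assms] mult_1_right)
  qed
  also have "\<dots> = exp s"
    using exp_converges[of s] by (simp add: sums_iff divide_inverse mult.commute)
  finally have h: "(\<Sum>y\<in>UNIV. (\<Sum>n. s ^ n / fact n * matpow P n x y)) = exp s" .
  have "(\<Sum>y\<in>UNIV. E P s x y) = exp (- s) * (\<Sum>y\<in>UNIV. (\<Sum>n. s ^ n / fact n * matpow P n x y))"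
    unfolding E_def by (rule sum_distrib_left[symmetric])
  also have "\<dots> = exp (- s) * exp s" by (simp only: h)
  also have "\<dots> = 1" by (simp add: exp_add[symmetric])
  finally show ?thesis .
qed

lemma E_sym: "(\<And>x y. P x y = P y x) \<Longrightarrow> E P s x y = E P s y x"
  unfolding E_def using matpow_sym[of P] by simp

lemma invm_E: "invm P (E P s)"
  using invm_matpow[of P] unfolding invm_def E_def by simp

lemma E_mult:
  assumes st: "stochastic_matrix P"
  shows "mmul (E P a) (E P b) = E P (a + b)"
proof (intro ext)
  fix x y
  define f where "f w n = a ^ n / fact n * matpow P n x w" for w n
  define g where "g w n = b ^ n / fact n * matpow P n w y" for w n
  have "(\<Sum>w\<in>UNIV. (\<Sum>n. f w n) * (\<Sum>n. g w n)) = (\<Sum>w\<in>UNIV. \<Sum>k. \<Sum>i\<le>k. f w i * g w (k - i))"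
    by (intro sum.cong refl Cauchy_product; unfold f_def g_def; rule E_summable_norm[OF st])
  also have "\<dots> = (\<Sum>k. \<Sum>w\<in>UNIV. \<Sum>i\<le>k. f w i * g w (k - i))"
    by (rule suminf_sum[symmetric], rule summable_Cauchy_product; unfold f_def g_def; rule E_summable_norm[OF st])
  also have "\<dots> = (\<Sum>k. (a + b) ^ k / fact k * matpow P k x y)"
  proof (intro suminf_cong)
    fix k
    have "(\<Sum>w\<in>UNIV. \<Sum>i\<le>k. f w i * g w (k - i)) = (\<Sum>i\<le>k. (a ^ i / fact i * (b ^ (k - i) / fact (k - i))) * (\<Sum>w\<in>UNIV. matpow P i x w * matpow P (k - i) w y))"
      unfolding f_def g_def by (subst sum.swap) (simp add: sum_distrib_left sum_divide_distrib mult_ac)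
    also have "\<dots> = (\<Sum>i\<le>k. (a ^ i / fact i * (b ^ (k - i) / fact (k - i)))) * matpow P k x y"
    proof -
      have q: "(\<Sum>w\<in>UNIV. matpow P i x w * matpow P (k - i) w y) = matpow P k x y" if "i \<in> {..k}" for i
      proof -
        have "matpow P k x y = matpow P (i + (k - i)) x y" using that by simp
        also have "\<dots> = (\<Sum>w\<in>UNIV. matpow P i x w * matpow P (k - i) w y)" by (simp only: matpow_add mmul_def)
        finally show ?thesis by simp
      qed
      show ?thesis by (simp only: q sum_distrib_right cong: sum.cong)
    qed
    also have "(\<Sum>i\<le>k. (a ^ i / fact i * (b ^ (k - i) / fact (k - i)))) = (a + b) ^ k / fact k"
      using exp_series_add_commuting[of a b k] by (simp add: divide_inverse mult_ac)
    finally show "(\<Sum>w\<in>UNIV. \<Sum>i\<le>k. f w i * g w (k - i)) = (a + b) ^ k / fact k * matpow P k x y" .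
  qed
  finally have *: "(\<Sum>w\<in>UNIV. (\<Sum>n. f w n) * (\<Sum>n. g w n)) = (\<Sum>k. (a + b) ^ k / fact k * matpow P k x y)" .
  have "mmul (E P a) (E P b) x y = (\<Sum>w\<in>UNIV. (exp (- a) * exp (- b)) * ((\<Sum>n. f w n) * (\<Sum>n. g w n)))"
    unfolding mmul_def E_def f_def g_def by (simp only: mult_ac)
  also have "\<dots> = exp (- a) * exp (- b) * (\<Sum>k. (a + b) ^ k / fact k * matpow P k x y)"
    by (simp only: sum_distrib_left[symmetric] *)
  also have "\<dots> = E P (a + b) x y" unfolding E_def by (simp add: exp_add[symmetric])
  finally show "mmul (E P a) (E P b) x y = E P (a + b) x y" .
qed

lemma P_sym:
  assumes st: "stochastic_matrix P" and irr: "irreducible_chain P"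
    and rev: "reversible_chain P" and tr: "transitive_chain P"
  shows "P x y = P y x"
proof -
  have cs_eq: "(\<Sum>x\<in>UNIV. P x y) = (\<Sum>x\<in>UNIV. P x y0)" for y y0
  proof -
    obtain \<phi> where au: "automorphism P \<phi>" and phi: "\<phi> y0 = y"
      using tr unfolding transitive_chain_def by blast
    have b: "bij \<phi>" using au by (simp add: automorphism_def)
    have "(\<Sum>x\<in>UNIV. P x y) = (\<Sum>x\<in>UNIV. P (\<phi> x) (\<phi> y0))"
      using bij_sum_reindex[OF b, of "\<lambda>x. P x (\<phi> y0)"] phi by simp
    also have "\<dots> = (\<Sum>x\<in>UNIV. P x y0)" using au by (simp add: automorphism_def)
    finally show ?thesis .
  qed
  have colsum: "(\<Sum>x\<in>UNIV. P x y) = 1" for y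
  proof -
    have "real (card (UNIV :: 'a set)) * (\<Sum>x\<in>UNIV. P x y) = (\<Sum>y'::'a\<in>UNIV. \<Sum>x\<in>UNIV. P x y)"
      by simp
    also have "\<dots> = (\<Sum>y'\<in>UNIV. \<Sum>x\<in>UNIV. P x y')"
      by (rule sum.cong[OF refl]) (rule cs_eq)
    also have "\<dots> = (\<Sum>x\<in>UNIV. \<Sum>y\<in>UNIV. P x y)" by (rule sum.swap)
    also have "\<dots> = real (card (UNIV :: 'a set))" using st by (simp add: stochastic_matrix_def)
    finally have "real (card (UNIV :: 'a set)) * (\<Sum>x\<in>UNIV. P x y) = real (card (UNIV :: 'a set))" .
    moreover have "card (UNIV :: 'a set) > 0" by simp
    ultimately show ?thesis by simp
  qed
  obtain \<pi> where pipos: "\<forall>x. \<pi> x > 0" and db: "\<forall>x y. \<pi> x * P x y = \<pi> y * P y x"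
    using rev unfolding reversible_chain_def by blast
  define m where "m = Max (range \<pi>)"
  have le_m: "\<pi> w \<le> m" for w unfolding m_def by simp
  have "m \<in> range \<pi>" unfolding m_def by (rule Max_in) auto
  then obtain x0 where x0: "\<pi> x0 = m" by auto
  have edge: "\<pi> w = m" if px: "\<pi> x = m" and pw: "P w x > 0" for w x
  proof -
    have "(\<Sum>w\<in>UNIV. P w x * (\<pi> x - \<pi> w)) = \<pi> x * (\<Sum>w\<in>UNIV. P w x) - (\<Sum>w\<in>UNIV. \<pi> w * P w x)"
      by (simp add: algebra_simps sum_subtractf sum_distrib_left)
    also have "(\<Sum>w\<in>UNIV. \<pi> w * P w x) = (\<Sum>w\<in>UNIV. \<pi> x * P x w)"
      by (intro sum.cong refl) (use db in blast)
    also have "\<dots> = \<pi> x" using st by (simp add: stochastic_matrix_def sum_distrib_left[symmetric])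
    finally have z: "(\<Sum>w\<in>UNIV. P w x * (\<pi> x - \<pi> w)) = 0" using colsum by simp
    have nn: "\<forall>w\<in>UNIV. 0 \<le> P w x * (\<pi> x - \<pi> w)"
      using st le_m px by (auto simp: stochastic_matrix_def)
    have "\<forall>w\<in>UNIV. P w x * (\<pi> x - \<pi> w) = 0" using sum_nonneg_eq_0_iff[of UNIV "\<lambda>w. P w x * (\<pi> x - \<pi> w)"] nn z by simp
    then have "P w x * (\<pi> x - \<pi> w) = 0" by blast
    then show ?thesis using pw px by simp
  qed
  have path: "\<pi> x = m \<Longrightarrow> matpow P n y x > 0 \<Longrightarrow> \<pi> y = m" for n y x
  proof (induction n arbitrary: x)
    case 0
    then show ?case by (auto split: if_splits)
  next
    case (Suc n)
    have "0 < (\<Sum>w\<in>UNIV. matpow P n y w * P w x)" using Suc.prems by simp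
    have "\<not> (\<forall>w\<in>UNIV. matpow P n y w * P w x \<le> 0)"
    proof
      assume "\<forall>w\<in>UNIV. matpow P n y w * P w x \<le> 0"
      then have "(\<Sum>w\<in>UNIV. matpow P n y w * P w x) \<le> 0" by (intro sum_nonpos) blast
      then show False using \<open>0 < (\<Sum>w\<in>UNIV. matpow P n y w * P w x)\<close> by linarith
    qed
    then obtain w where pos: "matpow P n y w * P w x > 0" by (auto simp: not_le)
    have n1: "matpow P n y w \<ge> 0" by (rule matpow_nonneg[OF st])
    have n2: "P w x \<ge> 0" using st unfolding stochastic_matrix_def by blast
    have a: "matpow P n y w > 0" and b: "P w x > 0" using pos n1 n2 by (auto simp: zero_less_mult_iff)
    have "\<pi> w = m" using edge[OF Suc.prems(1) b] .
    then show ?case using Suc.IH a by blast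
  qed
  have allm: "\<pi> y = m" for y
    using irr path[OF x0] unfolding irreducible_chain_def by blast
  have "m > 0" using pipos x0 by metis
  moreover have "m * P x y = m * P y x" using db allm by metis
  ultimately show ?thesis by simp
qed

fun ps :: "('b::finite \<Rightarrow> 'b \<Rightarrow> real) \<Rightarrow> 'b set \<Rightarrow> nat \<Rightarrow> 'b \<Rightarrow> real" where
  "ps K S 0 a = (if a \<in> S then 1 else 0)"
| "ps K S (Suc n) a = (if a \<in> S then (\<Sum>c\<in>UNIV. K a c * ps K S n c) else 0)"

lemma E_comm: "stochastic_matrix P \<Longrightarrow> mmul (E P a) (E P b) = mmul (E P b) (E P a)"
  by (simp add: E_mult add.commute)

lemma V_inv:
  fixes \<beta> \<kappa> :: real and P :: "'a::finite \<Rightarrow> 'a \<Rightarrow> real"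
  assumes st: "stochastic_matrix P" and sym: "\<And>x y. P x y = P y x" and tr: "transitive_chain P"
  defines "B \<equiv> E P \<beta>" and "K \<equiv> E P \<kappa>"
  shows "invm P (\<lambda>a b. ps K (-{b}) n a) \<and> mmul (\<lambda>a b. ps K (-{b}) n a) B = mmul B (\<lambda>a b. ps K (-{b}) n a)"
proof (induction n)
  case 0
  have Bsym: "B x y = B y x" for x y unfolding B_def using E_sym[of P, OF sym] by blast
  have Brow: "(\<Sum>y\<in>UNIV. B x y) = 1" for x unfolding B_def by (rule E_rowsum[OF st])
  have "invm P (\<lambda>a b. ps K (-{b}) 0 a)"
    unfolding invm_def automorphism_def by (auto simp: bij_def inj_eq)
  moreover have "mmul (\<lambda>a b. ps K (-{b}) 0 a) B = mmul B (\<lambda>a b. ps K (-{b}) 0 a)"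
  proof (intro ext)
    fix a b
    have "mmul (\<lambda>a b. ps K (-{b}) 0 a) B a b = (\<Sum>w\<in>UNIV. B w b - (if w = a then B w b else 0))"
      unfolding mmul_def by (intro sum.cong refl) auto
    also have "\<dots> = (\<Sum>w\<in>UNIV. B w b) - B a b" by (simp add: sum_subtractf)
    finally have 1: "mmul (\<lambda>a b. ps K (-{b}) 0 a) B a b = (\<Sum>w\<in>UNIV. B w b) - B a b" .
    have "mmul B (\<lambda>a b. ps K (-{b}) 0 a) a b = (\<Sum>w\<in>UNIV. B a w - (if w = b then B a w else 0))"
      unfolding mmul_def by (intro sum.cong refl) auto
    also have "\<dots> = (\<Sum>w\<in>UNIV. B a w) - B a b" by (simp add: sum_subtractf)
    finally have 2: "mmul B (\<lambda>a b. ps K (-{b}) 0 a) a b = (\<Sum>w\<in>UNIV. B a w) - B a b" .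
    note 1 2
    moreover have "(\<Sum>w\<in>UNIV. B w b) = (\<Sum>w\<in>UNIV. B a w)"
    proof -
      have "(\<Sum>w\<in>UNIV. B w b) = (\<Sum>w\<in>UNIV. B b w)" by (intro sum.cong refl) (rule Bsym)
      then show ?thesis using Brow[of b] Brow[of a] by simp
    qed
    ultimately show "mmul (\<lambda>a b. ps K (-{b}) 0 a) B a b = mmul B (\<lambda>a b. ps K (-{b}) 0 a) a b" by simp
  qed
  ultimately show ?case by blast
next
  case (Suc n)
  define V where "V = (\<lambda>a b. ps K (-{b}) n a)"
  define W where "W = mmul K V"
  have Vi: "invm P V" and VB: "mmul V B = mmul B V" using Suc V_def by auto
  have Wi: "invm P W" unfolding W_def K_def using invm_mmul[OF invm_E Vi] .
  obtain a0 :: 'a where True by blast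
  define w0 where "w0 = W a0 a0"
  have diag: "W a a = w0" for a
  proof -
    obtain \<phi> where au: "automorphism P \<phi>" and phi: "\<phi> a0 = a"
      using tr unfolding transitive_chain_def by blast
    have "W (\<phi> a0) (\<phi> a0) = W a0 a0" using Wi au unfolding invm_def by blast
    then show ?thesis using phi w0_def by simp
  qed
  have V'eq: "(\<lambda>a b. ps K (-{b}) (Suc n) a) = (\<lambda>a b. W a b - (if a = b then w0 else 0))"
  proof -
    have diag': "(\<Sum>w\<in>UNIV. K a w * ps K (-{a}) n w) = w0" for a
      using diag[of a] by (simp add: W_def V_def mmul_def)
    show ?thesis by (intro ext) (auto simp: W_def V_def mmul_def diag')
  qed
  have KB: "mmul K B = mmul B K" unfolding K_def B_def by (rule E_comm[OF st])
  have WB: "mmul W B = mmul B W"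
    unfolding W_def by (simp only: mmul_assoc VB) (simp only: mmul_assoc[symmetric] KB)
  have "invm P (\<lambda>a b. W a b - (if a = b then w0 else 0))"
    using Wi unfolding invm_def automorphism_def by (auto simp: bij_def inj_eq)
  moreover have "mmul (\<lambda>a b. W a b - (if a = b then w0 else 0)) B = mmul B (\<lambda>a b. W a b - (if a = b then w0 else 0))"
  proof (intro ext)
    fix a b
    have "mmul (\<lambda>a b. W a b - (if a = b then w0 else 0)) B a b
        = (\<Sum>w\<in>UNIV. W a w * B w b - (if w = a then w0 * B w b else 0))"
      unfolding mmul_def by (intro sum.cong refl) (auto simp: left_diff_distrib)
    also have "\<dots> = mmul W B a b - w0 * B a b" by (simp add: sum_subtractf mmul_def)
    finally have 1: "mmul (\<lambda>a b. W a b - (if a = b then w0 else 0)) B a b = mmul W B a b - w0 * B a b" .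
    have "mmul B (\<lambda>a b. W a b - (if a = b then w0 else 0)) a b
        = (\<Sum>w\<in>UNIV. B a w * W w b - (if w = b then w0 * B a w else 0))"
      unfolding mmul_def by (intro sum.cong refl) (auto simp: right_diff_distrib)
    also have "\<dots> = mmul B W a b - w0 * B a b" by (simp add: sum_subtractf mmul_def)
    finally have 2: "mmul B (\<lambda>a b. W a b - (if a = b then w0 else 0)) a b = mmul B W a b - w0 * B a b" .
    note 1 2
    moreover
    ultimately show "mmul (\<lambda>a b. W a b - (if a = b then w0 else 0)) B a b = mmul B (\<lambda>a b. W a b - (if a = b then w0 else 0)) a b"
      using WB by simp
  qed
  ultimately show ?case by (simp only: V'eq)
qed

lemma UV:
  assumes st: "stochastic_matrix P" and sym: "\<And>x y. P x y = P y x" and tr: "transitive_chain P"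
  shows "ps (\<lambda>p q. E P \<alpha> (fst p) (fst q) * E P \<beta> (snd p) (snd q)) {p. fst p \<noteq> snd p} n (a, b)
       = ps (E P (\<alpha> + \<beta>)) (-{b}) n a"
proof (induction n arbitrary: a b)
  case 0
  then show ?case by simp
next
  case (Suc n)
  define A where "A = E P \<alpha>"
  define B where "B = E P \<beta>"
  define K where "K = E P (\<alpha> + \<beta>)"
  define V where "V = (\<lambda>a b. ps K (-{b}) n a)"
  have Bsym: "B x y = B y x" for x y unfolding B_def using E_sym[of P, OF sym] by blast
  have VB: "mmul V B = mmul B V" unfolding V_def B_def K_def using V_inv[OF st sym tr] by blast
  have AB: "mmul A B = K" unfolding A_def B_def K_def by (rule E_mult[OF st])
  have "(\<Sum>q\<in>UNIV. A a (fst q) * B b (snd q) * V (fst q) (snd q))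
      = (\<Sum>c\<in>UNIV. \<Sum>d\<in>UNIV. A a c * B b d * V c d)"
    by (simp add: sum.cartesian_product case_prod_beta UNIV_Times_UNIV[symmetric] del: UNIV_Times_UNIV)
  also have "\<dots> = (\<Sum>c\<in>UNIV. A a c * mmul V B c b)"
    by (simp add: mmul_def sum_distrib_left Bsym[of b] mult_ac)
  also have "\<dots> = mmul A (mmul B V) a b" by (simp only: VB[symmetric]) (simp add: mmul_def)
  also have "\<dots> = mmul K V a b" by (simp add: mmul_assoc[symmetric] AB)
  finally have *: "(\<Sum>q\<in>UNIV. A a (fst q) * B b (snd q) * V (fst q) (snd q)) = mmul K V a b" .
  have IH': "ps (\<lambda>p q. E P \<alpha> (fst p) (fst q) * E P \<beta> (snd p) (snd q)) {p. fst p \<noteq> snd p} n q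
      = ps (E P (\<alpha> + \<beta>)) (-{snd q}) n (fst q)" for q
    using Suc.IH[of "fst q" "snd q"] by simp
  show ?case using * unfolding A_def B_def K_def V_def by (simp add: mmul_def IH')
qed



lemma sum_lists_Suc:
  fixes f :: "'b list \<Rightarrow> real"
  assumes "finite S"
  shows "(\<Sum>xs\<in>{xs. set xs \<subseteq> S \<and> length xs = Suc m}. f xs)
       = (\<Sum>ys\<in>{xs. set xs \<subseteq> S \<and> length xs = m}. \<Sum>b\<in>S. f (b # ys))"
proof -
  have "(\<Sum>xs\<in>{xs. set xs \<subseteq> S \<and> length xs = Suc m}. f xs)
      = (\<Sum>p\<in>{xs. set xs \<subseteq> S \<and> length xs = m} \<times> S. f ((\<lambda>(xs, n). n # xs) p))"
    unfolding lists_length_Suc_eq by (subst sum.reindex[OF inj_split_Cons]) (simp add: comp_def)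
  also have "\<dots> = (\<Sum>ys\<in>{xs. set xs \<subseteq> S \<and> length xs = m}. \<Sum>b\<in>S. f (b # ys))"
    by (simp add: sum.cartesian_product case_prod_beta)
  finally show ?thesis .
qed

lemma ind_mult: "(if P then 1 else 0) * (x::real) = (if P then x else 0)" by simp
lemma ind_mult2: "(x::real) * (if P then y else 0) = (if P then x * y else 0)" by simp

lemma pathsum:
  fixes K :: "'b::finite \<Rightarrow> 'b \<Rightarrow> real"
  shows "(\<Sum>xs\<in>{xs. set xs \<subseteq> S \<and> length xs = Suc n}.
           (if xs ! 0 = a then 1 else 0) * (\<Prod>i<n. K (xs ! i) (xs ! Suc i))) = ps K S n a"
proof (induction n arbitrary: a)
  case 0
  have e: "{xs::'b list. set xs \<subseteq> S \<and> length xs = 0} = {[]}" by auto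
  have "(\<Sum>xs\<in>{xs. set xs \<subseteq> S \<and> length xs = Suc 0}.
           (if xs ! 0 = a then 1 else 0) * (\<Prod>i<0. K (xs ! i) (xs ! Suc i)))
       = (\<Sum>b\<in>S. (if b = a then 1 else 0))"
    by (simp only: sum_lists_Suc[OF finite] e) simp
  also have "\<dots> = ps K S 0 a" by (simp add: sum.delta')
  finally show ?case .
next
  case (Suc n)
  define L where "L = {xs. set xs \<subseteq> S \<and> length xs = Suc n}"
  define Q where "Q ys = (\<Prod>i<n. K (ys ! i) (ys ! Suc i))" for ys
  have "(\<Sum>xs\<in>{xs. set xs \<subseteq> S \<and> length xs = Suc (Suc n)}.
           (if xs ! 0 = a then 1 else 0) * (\<Prod>i<Suc n. K (xs ! i) (xs ! Suc i)))
       = (\<Sum>ys\<in>L. \<Sum>b\<in>S. (if b = a then 1 else 0) * (K b (ys ! 0) * Q ys))"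
    unfolding L_def Q_def by (simp only: sum_lists_Suc[OF finite] prod.lessThan_Suc_shift nth_Cons_0 nth_Cons_Suc)
  also have "\<dots> = (\<Sum>ys\<in>L. if a \<in> S then K a (ys ! 0) * Q ys else 0)"
    by (intro sum.cong refl) (simp add: ind_mult sum.delta')
  also have "\<dots> = (if a \<in> S then (\<Sum>ys\<in>L. K a (ys ! 0) * Q ys) else 0)"
    by simp
  also have "(\<Sum>ys\<in>L. K a (ys ! 0) * Q ys) = (\<Sum>ys\<in>L. \<Sum>c\<in>UNIV. K a c * ((if ys ! 0 = c then 1 else 0) * Q ys))"
    by (intro sum.cong refl) (simp add: ind_mult ind_mult2 sum.delta)
  also have "\<dots> = (\<Sum>c\<in>UNIV. K a c * (\<Sum>ys\<in>L. (if ys ! 0 = c then 1 else 0) * Q ys))"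
    by (subst sum.swap) (simp add: sum_distrib_left)
  also have "\<dots> = (\<Sum>c\<in>UNIV. K a c * ps K S n c)"
    using Suc.IH unfolding L_def Q_def by simp
  finally show ?case by simp
qed

lemma fidi_event_sets:
  fixes n :: nat
  assumes meas: "\<And>t. (\<lambda>\<omega>. W \<omega> t) \<in> measurable M (count_space UNIV)"
  shows "{\<omega>\<in>space M. \<forall>i\<le>n. W \<omega> (tt i) = v i} \<in> sets M"
proof -
  have single: "{\<omega>\<in>space M. W \<omega> (tt i) = v i} \<in> sets M" for i
  proof -
    have "{\<omega>\<in>space M. W \<omega> (tt i) = v i} = (\<lambda>\<omega>. W \<omega> (tt i)) -` {v i} \<inter> space M" by auto
    then show ?thesis using measurable_sets[OF meas[of "tt i"], of "{v i}"] by simp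
  qed
  have "{\<omega>\<in>space M. \<forall>i\<le>n. W \<omega> (tt i) = v i} = {\<omega>\<in>space M. \<forall>i\<in>{..n}. W \<omega> (tt i) = v i}" by auto
  also have "\<dots> \<in> sets M" by (rule sets.sets_Collect_finite_All) (use single in auto)
  finally show ?thesis .
qed

lemma avoid_prob:
  fixes W :: "'w \<Rightarrow> real \<Rightarrow> 'b::finite" and K :: "'b \<Rightarrow> 'b \<Rightarrow> real"
  assumes M: "prob_space M"
    and meas: "\<And>t. (\<lambda>\<omega>. W \<omega> t) \<in> measurable M (count_space UNIV)"
    and fidi: "\<And>s. measure M {\<omega>\<in>space M. \<forall>i\<le>n. W \<omega> (tt i) = s i}
                  = (if s 0 = w0 then 1 else 0) * (\<Prod>i<n. K (s i) (s (Suc i)))"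
  shows "measure M {\<omega>\<in>space M. \<forall>i\<le>n. W \<omega> (tt i) \<in> S} = ps K S n w0"
proof -
  interpret prob_space M by (rule M)
  define L where "L = {xs. set xs \<subseteq> S \<and> length xs = Suc n}"
  define B where "B xs = {\<omega>\<in>space M. \<forall>i\<le>n. W \<omega> (tt i) = xs ! i}" for xs
  have Bsets: "B xs \<in> sets M" for xs unfolding B_def by (rule fidi_event_sets[OF meas])
  have eq: "{\<omega>\<in>space M. \<forall>i\<le>n. W \<omega> (tt i) \<in> S} = (\<Union>xs\<in>L. B xs)"
  proof (intro equalityI subsetI)
    fix \<omega> assume "\<omega> \<in> {\<omega>\<in>space M. \<forall>i\<le>n. W \<omega> (tt i) \<in> S}"
    then have sp: "\<omega> \<in> space M" and inS: "\<forall>i\<le>n. W \<omega> (tt i) \<in> S" by auto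
    define xs where "xs = map (\<lambda>i. W \<omega> (tt i)) [0..<Suc n]"
    have "xs \<in> L" unfolding L_def xs_def using inS by (auto simp: less_Suc_eq_le)
    moreover have "\<omega> \<in> B xs" unfolding B_def xs_def using sp by (auto simp del: upt_Suc simp: nth_map less_Suc_eq_le)
    ultimately show "\<omega> \<in> (\<Union>xs\<in>L. B xs)" by blast
  next
    fix \<omega> assume "\<omega> \<in> (\<Union>xs\<in>L. B xs)"
    then obtain xs where xs: "xs \<in> L" and w: "\<omega> \<in> B xs" by blast
    have "W \<omega> (tt i) \<in> S" if "i \<le> n" for i
    proof -
      have "W \<omega> (tt i) = xs ! i" using w that unfolding B_def by auto
      moreover have "xs ! i \<in> set xs" using xs that unfolding L_def by (auto intro!: nth_mem)
      ultimately show ?thesis using xs unfolding L_def by auto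
    qed
    then show "\<omega> \<in> {\<omega>\<in>space M. \<forall>i\<le>n. W \<omega> (tt i) \<in> S}" using w unfolding B_def by auto
  qed
  have fin: "finite L" unfolding L_def by (rule finite_lists_length_eq) simp
  have disj: "disjoint_family_on B L"
  proof (unfold disjoint_family_on_def, intro ballI impI)
    fix xs ys assume xs: "xs \<in> L" and ys: "ys \<in> L" and ne: "xs \<noteq> ys"
    show "B xs \<inter> B ys = {}"
    proof (rule ccontr)
      assume "B xs \<inter> B ys \<noteq> {}"
      then obtain \<omega> where "\<omega> \<in> B xs" "\<omega> \<in> B ys" by blast
      then have "\<forall>i\<le>n. xs ! i = ys ! i" unfolding B_def by auto
      then have "xs = ys" using xs ys unfolding L_def by (intro nth_equalityI) (auto simp: less_Suc_eq_le)
      then show False using ne by simp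
    qed
  qed
  have "measure M {\<omega>\<in>space M. \<forall>i\<le>n. W \<omega> (tt i) \<in> S} = (\<Sum>xs\<in>L. measure M (B xs))"
    unfolding eq by (rule measure_finite_Union[OF fin _ disj]) (auto simp: Bsets emeasure_finite)
  also have "\<dots> = (\<Sum>xs\<in>L. (if xs ! 0 = w0 then 1 else 0) * (\<Prod>i<n. K (xs ! i) (xs ! Suc i)))"
    unfolding B_def by (intro sum.cong refl) (rule fidi)
  also have "\<dots> = ps K S n w0" unfolding L_def by (rule pathsum)
  finally show ?thesis .
qed

lemma space_path_space: "space path_space = UNIV"
  by (auto simp: space_PiM)

lemma pair_fidi:
  fixes Y Z :: "'v \<Rightarrow> real \<Rightarrow> 'a::finite"
  assumes N: "prob_space N" and ind: "prob_space.indep_var N path_space Y path_space Z"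
    and fY: "\<And>s. measure N {\<omega>\<in>space N. \<forall>i\<le>n. Y \<omega> (tt i) = s i}
                  = (if s 0 = y0 then 1 else 0) * (\<Prod>i<n. A (s i) (s (Suc i)))"
    and fZ: "\<And>s. measure N {\<omega>\<in>space N. \<forall>i\<le>n. Z \<omega> (tt i) = s i}
                  = (if s 0 = z0 then 1 else 0) * (\<Prod>i<n. B (s i) (s (Suc i)))"
  shows "measure N {\<omega>\<in>space N. \<forall>i\<le>n. (Y \<omega> (tt i), Z \<omega> (tt i)) = s i}
       = (if s 0 = (y0, z0) then 1 else 0) *
         (\<Prod>i<n. A (fst (s i)) (fst (s (Suc i))) * B (snd (s i)) (snd (s (Suc i))))"
proof -
  interpret prob_space N by (rule N)
  have comp: "(\<lambda>f. f t) \<in> measurable path_space (count_space UNIV)" for t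
    by (rule measurable_component_singleton) simp
  define FA where "FA = {f::real \<Rightarrow> 'a. \<forall>i\<le>n. f (tt i) = fst (s i)}"
  define FB where "FB = {f::real \<Rightarrow> 'a. \<forall>i\<le>n. f (tt i) = snd (s i)}"
  have FAs: "FA \<in> sets path_space"
    using fidi_event_sets[where M=path_space and W="\<lambda>f t. f t" and n=n and tt=tt and v="\<lambda>i. fst (s i)", OF comp]
    unfolding FA_def space_path_space by simp
  have FBs: "FB \<in> sets path_space"
    using fidi_event_sets[where M=path_space and W="\<lambda>f t. f t" and n=n and tt=tt and v="\<lambda>i. snd (s i)", OF comp]
    unfolding FB_def space_path_space by simp
  have iset: "indep_set (sigma_sets (space N) {Y -` A \<inter> space N | A. A \<in> sets path_space})
      (sigma_sets (space N) {Z -` A \<inter> space N | A. A \<in> sets path_space})"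
    using ind unfolding indep_var_eq by blast
  have a: "Y -` FA \<inter> space N \<in> sigma_sets (space N) {Y -` A \<inter> space N | A. A \<in> sets path_space}"
    using FAs by (intro sigma_sets.Basic) blast
  have b: "Z -` FB \<inter> space N \<in> sigma_sets (space N) {Z -` A \<inter> space N | A. A \<in> sets path_space}"
    using FBs by (intro sigma_sets.Basic) blast
  have prodeq: "prob ((Y -` FA \<inter> space N) \<inter> (Z -` FB \<inter> space N)) = prob (Y -` FA \<inter> space N) * prob (Z -` FB \<inter> space N)"
    using iset a b unfolding indep_sets2_eq by blast
  have e1: "Y -` FA \<inter> space N = {\<omega>\<in>space N. \<forall>i\<le>n. Y \<omega> (tt i) = fst (s i)}" unfolding FA_def by auto
  have e2: "Z -` FB \<inter> space N = {\<omega>\<in>space N. \<forall>i\<le>n. Z \<omega> (tt i) = snd (s i)}" unfolding FB_def by auto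
  have e3: "{\<omega>\<in>space N. \<forall>i\<le>n. (Y \<omega> (tt i), Z \<omega> (tt i)) = s i} = (Y -` FA \<inter> space N) \<inter> (Z -` FB \<inter> space N)"
    unfolding FA_def FB_def by (auto simp: prod_eq_iff)
  have "measure N {\<omega>\<in>space N. \<forall>i\<le>n. (Y \<omega> (tt i), Z \<omega> (tt i)) = s i}
      = prob (Y -` FA \<inter> space N) * prob (Z -` FB \<inter> space N)"
    by (simp only: e3 prodeq)
  also have "\<dots> = ((if fst (s 0) = y0 then 1 else 0) * (\<Prod>i<n. A (fst (s i)) (fst (s (Suc i)))))
      * ((if snd (s 0) = z0 then 1 else 0) * (\<Prod>i<n. B (snd (s i)) (snd (s (Suc i)))))"
    by (simp only: e1 e2 fY fZ)
  also have "\<dots> = (if s 0 = (y0, z0) then 1 else 0) *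
         (\<Prod>i<n. A (fst (s i)) (fst (s (Suc i))) * B (snd (s i)) (snd (s (Suc i))))"
    by (simp add: prod.distrib prod_eq_iff)
  finally show ?thesis .
qed

lemma arch_half:
  fixes cc \<epsilon> :: real
  assumes "0 < \<epsilon>" "0 < cc"
  shows "\<exists>m. cc / 2^m < \<epsilon>"
proof -
  have q: "0 < \<epsilon> / cc" using assms by simp
  have "\<exists>m. (1/2::real) ^ m < \<epsilon> / cc" by (rule real_arch_pow_inv[OF q]) simp
  then obtain m where m: "(1/2::real) ^ m < \<epsilon> / cc" by blast
  have po: "(1/2::real)^m = 1 / 2^m" by (rule power_one_over)
  have "cc / 2^m = cc * (1/2)^m" unfolding po by simp
  also have "\<dots> < cc * (\<epsilon> / cc)" using m assms by (intro mult_strict_left_mono) auto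
  also have "\<dots> = \<epsilon>" using assms by simp
  finally show ?thesis by blast
qed

lemma ceil_grid:
  fixes t h :: real
  assumes t0: "0 \<le> t" and hpos: "0 < h"
  shows "\<exists>i::nat. t \<le> real i * h \<and> real i * h < t + h"
proof -
  define i where "i = nat \<lceil>t / h\<rceil>"
  have ri: "real i = of_int \<lceil>t / h\<rceil>" unfolding i_def using t0 hpos by simp
  have lo: "t / h \<le> real i" unfolding ri by simp
  have hi: "real i < t / h + 1" unfolding ri by linarith
  have lo': "t \<le> real i * h" using lo hpos by (simp add: divide_le_eq)
  have hi': "real i * h < t + h" using hi hpos by (simp add: field_simps)
  show ?thesis using lo' hi' by blast
qed

lemma rc_grid:
  fixes W :: "real \<Rightarrow> 'b"
  assumes ev: "eventually (\<lambda>s. W s = W t) (at_right t)" and t0: "0 \<le> t" and tc: "t < cc"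
  shows "\<exists>m i. i < (2::nat)^m \<and> W (real i * (cc / 2^m)) = W t"
proof -
  obtain b where bt: "b > t" and bprop: "\<And>y. y > t \<Longrightarrow> y < b \<Longrightarrow> W y = W t"
    using ev unfolding eventually_at_right_field by blast
  have ccpos: "cc > 0" using t0 tc by simp
  define \<epsilon> where "\<epsilon> = min (b - t) (cc - t)"
  have ep: "\<epsilon> > 0" unfolding \<epsilon>_def using bt tc by simp
  obtain m where he: "cc / 2^m < \<epsilon>" using arch_half[OF ep ccpos] by blast
  define h where "h = cc / 2^m"
  have hpos: "h > 0" unfolding h_def using ccpos by simp
  obtain i :: nat where lo': "t \<le> real i * h" and hi': "real i * h < t + h" using ceil_grid[OF t0 hpos] by blast
  have "real i * h < cc" using hi' he unfolding \<epsilon>_def h_def by simp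
  then have "real i * h < 2^m * h" unfolding h_def by simp
  then have "real i < 2^m" using hpos by simp
  then have "real i < real ((2::nat) ^ m)" by simp
  then have ilt: "i < (2::nat)^m" by (simp only: of_nat_less_iff)
  have "W (real i * h) = W t"
  proof (cases "real i * h = t")
    case True then show ?thesis by simp
  next
    case False
    then have "real i * h > t" using lo' by simp
    moreover have "real i * h < b" using hi' he unfolding \<epsilon>_def h_def by simp
    ultimately show ?thesis by (rule bprop)
  qed
  then show ?thesis using ilt unfolding h_def by blast
qed

lemma inf_char:
  fixes T :: "real set" and c \<alpha> :: real
  assumes al: "\<alpha> > 0"
  shows "Inf (ereal ` T) \<le> ereal c \<longleftrightarrow> (\<forall>k. \<exists>t\<in>T. t < c + \<alpha> / real (Suc k))"
proof
  assume le: "Inf (ereal ` T) \<le> ereal c"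
  show "\<forall>k. \<exists>t\<in>T. t < c + \<alpha> / real (Suc k)"
  proof
    fix k
    have "ereal c < ereal (c + \<alpha> / real (Suc k))" using al by simp
    with le have "Inf (ereal ` T) < ereal (c + \<alpha> / real (Suc k))" by (rule le_less_trans)
    then obtain y where y: "y \<in> ereal ` T" and yl: "y < ereal (c + \<alpha> / real (Suc k))"
      unfolding Inf_less_iff by blast
    from y obtain t where t: "t \<in> T" and yt: "y = ereal t" by blast
    show "\<exists>t\<in>T. t < c + \<alpha> / real (Suc k)" using t yl yt by auto
  qed
next
  assume a: "\<forall>k. \<exists>t\<in>T. t < c + \<alpha> / real (Suc k)"
  show "Inf (ereal ` T) \<le> ereal c"
  proof (rule ccontr)
    assume "\<not> Inf (ereal ` T) \<le> ereal c"
    then have "ereal c < Inf (ereal ` T)" by simp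
    then obtain r where cr: "ereal c < ereal r" and rI: "ereal r < Inf (ereal ` T)"
      using ereal_dense2 by blast
    have rc: "c < r" using cr by simp
    have "0 < (r - c) / \<alpha>" using rc al by simp
    then obtain k where k: "inverse (real (Suc k)) < (r - c) / \<alpha>" using reals_Archimedean by blast
    have "\<alpha> * inverse (real (Suc k)) < \<alpha> * ((r - c) / \<alpha>)" by (rule mult_strict_left_mono[OF k al])
    moreover have "\<alpha> * ((r - c) / \<alpha>) = r - c" using al by simp
    moreover have "\<alpha> * inverse (real (Suc k)) = \<alpha> / real (Suc k)" by (simp add: divide_inverse)
    ultimately have "\<alpha> / real (Suc k) < r - c" by simp
    then have ccr: "c + \<alpha> / real (Suc k) < r" by simp
    obtain t where t: "t \<in> T" "t < c + \<alpha> / real (Suc k)" using a by blast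
    have "Inf (ereal ` T) \<le> ereal t" using t by (intro Inf_lower) auto
    also have "ereal t < ereal r" using t ccr by simp
    finally show False using rI by simp
  qed
qed

lemma hit_lim:
  fixes W :: "'w \<Rightarrow> real \<Rightarrow> 'b::finite" and S :: "'b set" and c \<alpha> :: real
  assumes M: "prob_space M"
    and meas: "\<And>t. (\<lambda>\<omega>. W \<omega> t) \<in> measurable M (count_space UNIV)"
    and rc: "\<And>\<omega> t. \<omega> \<in> space M \<Longrightarrow> t \<ge> 0 \<Longrightarrow> eventually (\<lambda>s. W \<omega> s = W \<omega> t) (at_right t)"
    and c: "c \<ge> 0" and al: "\<alpha> > 0"
  shows "(\<lambda>k. lim (\<lambda>m. measure M {\<omega>\<in>space M. \<exists>i<(2::nat)^m. W \<omega> (real i * ((c + \<alpha> / real (Suc k)) / 2^m)) \<notin> S}))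
          \<longlonglongrightarrow> measure M {\<omega>\<in>space M. Inf (ereal ` {t. 0 \<le> t \<and> W \<omega> t \<notin> S}) \<le> ereal c}"
proof -
  interpret prob_space M by (rule M)
  define cc where "cc k = c + \<alpha> / real (Suc k)" for k
  define E where "E k m = {\<omega>\<in>space M. \<exists>i<(2::nat)^m. W \<omega> (real i * (cc k / 2^m)) \<notin> S}" for k m
  define D where "D k = {\<omega>\<in>space M. \<exists>t. 0 \<le> t \<and> t < cc k \<and> W \<omega> t \<notin> S}" for k
  have ccpos: "cc k > 0" for k using c al unfolding cc_def by (simp add: add_nonneg_pos)
  have single: "{\<omega>\<in>space M. W \<omega> t \<notin> S} \<in> sets M" for t
  proof -
    have "{\<omega>\<in>space M. W \<omega> t \<notin> S} = (\<lambda>\<omega>. W \<omega> t) -` (- S) \<inter> space M" by auto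
    then show ?thesis using measurable_sets[OF meas[of t], of "- S"] by simp
  qed
  have Esets: "E k m \<in> sets M" for k m
  proof -
    have "E k m = {\<omega>\<in>space M. \<exists>i\<in>{..<(2::nat)^m}. W \<omega> (real i * (cc k / 2^m)) \<notin> S}"
      unfolding E_def by auto
    also have "\<dots> \<in> sets M" by (rule sets.sets_Collect_finite_Ex) (use single in auto)
    finally show ?thesis .
  qed
  have Einc: "incseq (E k)" for k
  proof (rule incseq_SucI, rule subsetI)
    fix m \<omega> assume "\<omega> \<in> E k m"
    then obtain i where sp: "\<omega> \<in> space M" and i: "i < (2::nat)^m" and w: "W \<omega> (real i * (cc k / 2^m)) \<notin> S"
      unfolding E_def by blast
    have e1: "real (2 * i) * (cc k / 2 ^ Suc m) = real i * (cc k / 2^m)" by simp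
    have "\<exists>j<(2::nat)^Suc m. W \<omega> (real j * (cc k / 2 ^ Suc m)) \<notin> S"
    proof (intro exI conjI)
      show "2 * i < (2::nat) ^ Suc m" using i by simp
      show "W \<omega> (real (2 * i) * (cc k / 2 ^ Suc m)) \<notin> S" by (subst e1) (rule w)
    qed
    then show "\<omega> \<in> E k (Suc m)" unfolding E_def using sp by blast
  qed
  have ED: "(\<Union>m. E k m) = D k" for k
  proof (intro equalityI subsetI)
    fix \<omega> assume "\<omega> \<in> (\<Union>m. E k m)"
    then obtain m i where sp: "\<omega> \<in> space M" and i: "i < (2::nat)^m" and w: "W \<omega> (real i * (cc k / 2^m)) \<notin> S"
      unfolding E_def by blast
    have "real i < real ((2::nat) ^ m)" using i by (simp only: of_nat_less_iff)
    then have "real i < 2 ^ m" by simp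
    then have "real i * (cc k / 2^m) < 2^m * (cc k / 2^m)" using ccpos[of k] by (intro mult_strict_right_mono) auto
    then have "real i * (cc k / 2^m) < cc k" by simp
    moreover have "0 \<le> real i * (cc k / 2^m)" using ccpos[of k] by simp
    ultimately show "\<omega> \<in> D k" unfolding D_def using sp w by blast
  next
    fix \<omega> assume "\<omega> \<in> D k"
    then obtain t where sp: "\<omega> \<in> space M" and t0: "0 \<le> t" and tc: "t < cc k" and w: "W \<omega> t \<notin> S"
      unfolding D_def by blast
    obtain m i where ilt: "i < (2::nat)^m" and eq: "W \<omega> (real i * (cc k / 2^m)) = W \<omega> t"
      using rc_grid[OF rc[OF sp t0] t0 tc] by blast
    then have "\<omega> \<in> E k m" unfolding E_def using sp w by auto
    then show "\<omega> \<in> (\<Union>m. E k m)" by blast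
  qed
  have Dsets: "D k \<in> sets M" for k
    unfolding ED[symmetric] using Esets by (intro sets.countable_UN) auto
  have lim1: "lim (\<lambda>m. measure M (E k m)) = measure M (D k)" for k
  proof (rule limI)
    show "(\<lambda>m. measure M (E k m)) \<longlonglongrightarrow> measure M (D k)"
      unfolding ED[symmetric] by (rule finite_Lim_measure_incseq) (use Esets Einc in auto)
  qed
  have Ddec: "decseq D"
    unfolding decseq_def
  proof (intro allI impI subsetI)
    fix k k' \<omega> assume kk: "k \<le> k'" and "\<omega> \<in> D k'"
    moreover have "cc k' \<le> cc k" unfolding cc_def using kk al
      by (intro add_left_mono divide_left_mono) auto
    ultimately show "\<omega> \<in> D k" unfolding D_def by (auto intro: less_le_trans)
  qed
  have HD: "{\<omega>\<in>space M. Inf (ereal ` {t. 0 \<le> t \<and> W \<omega> t \<notin> S}) \<le> ereal c} = (\<Inter>k. D k)"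
  proof (intro equalityI subsetI)
    fix \<omega> assume "\<omega> \<in> {\<omega>\<in>space M. Inf (ereal ` {t. 0 \<le> t \<and> W \<omega> t \<notin> S}) \<le> ereal c}"
    then have sp: "\<omega> \<in> space M" and le: "Inf (ereal ` {t. 0 \<le> t \<and> W \<omega> t \<notin> S}) \<le> ereal c" by auto
    have "\<forall>k. \<exists>t\<in>{t. 0 \<le> t \<and> W \<omega> t \<notin> S}. t < c + \<alpha> / real (Suc k)"
      using le inf_char[OF al, of "{t. 0 \<le> t \<and> W \<omega> t \<notin> S}" c] by blast
    then show "\<omega> \<in> (\<Inter>k. D k)" unfolding D_def cc_def using sp by auto
  next
    fix \<omega> assume a: "\<omega> \<in> (\<Inter>k. D k)"
    then have sp: "\<omega> \<in> space M" unfolding D_def by auto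
    have "\<forall>k. \<exists>t\<in>{t. 0 \<le> t \<and> W \<omega> t \<notin> S}. t < c + \<alpha> / real (Suc k)"
      using a unfolding D_def cc_def by blast
    then have "Inf (ereal ` {t. 0 \<le> t \<and> W \<omega> t \<notin> S}) \<le> ereal c"
      using inf_char[OF al, of "{t. 0 \<le> t \<and> W \<omega> t \<notin> S}" c] by blast
    then show "\<omega> \<in> {\<omega>\<in>space M. Inf (ereal ` {t. 0 \<le> t \<and> W \<omega> t \<notin> S}) \<le> ereal c}" using sp by simp
  qed
  have "(\<lambda>k. measure M (D k)) \<longlonglongrightarrow> measure M (\<Inter>k. D k)"
    by (rule finite_Lim_measure_decseq) (use Dsets Ddec in auto)
  then show ?thesis unfolding HD[symmetric] lim1[symmetric] E_def cc_def .
qed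



lemma grid_event_sets:
  fixes n :: nat
  assumes meas: "\<And>t. (\<lambda>\<omega>. W \<omega> t) \<in> measurable M (count_space UNIV)"
  shows "{\<omega>\<in>space M. \<forall>i\<le>n. W \<omega> (tt i) \<in> S} \<in> sets M"
proof -
  have single: "{\<omega>\<in>space M. W \<omega> (tt i) \<in> S} \<in> sets M" for i
  proof -
    have "{\<omega>\<in>space M. W \<omega> (tt i) \<in> S} = (\<lambda>\<omega>. W \<omega> (tt i)) -` S \<inter> space M" by auto
    then show ?thesis using measurable_sets[OF meas[of "tt i"], of "S"] by simp
  qed
  have "{\<omega>\<in>space M. \<forall>i\<le>n. W \<omega> (tt i) \<in> S} = {\<omega>\<in>space M. \<forall>i\<in>{..n}. W \<omega> (tt i) \<in> S}" by auto
  also have "\<dots> \<in> sets M" by (rule sets.sets_Collect_finite_All) (use single in auto)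
  finally show ?thesis .
qed

lemma grid_prob:
  fixes W :: "'w \<Rightarrow> real \<Rightarrow> 'b::finite" and K :: "'b \<Rightarrow> 'b \<Rightarrow> real"
  assumes M: "prob_space M"
    and meas: "\<And>t. (\<lambda>\<omega>. W \<omega> t) \<in> measurable M (count_space UNIV)"
    and fidi: "\<And>s. measure M {\<omega>\<in>space M. \<forall>i\<le>(2::nat)^m - 1. W \<omega> (real i * h) = s i}
                  = (if s 0 = w0 then 1 else 0) * (\<Prod>i<(2::nat)^m - 1. K (s i) (s (Suc i)))"
  shows "measure M {\<omega>\<in>space M. \<exists>i<(2::nat)^m. W \<omega> (real i * h) \<notin> S} = 1 - ps K S ((2::nat)^m - 1) w0"
proof -
  interpret prob_space M by (rule M)
  have pos: "(0::nat) < 2^m" by simp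
  have lt: "i < (2::nat)^m \<longleftrightarrow> i \<le> 2^m - 1" for i using pos by linarith
  have "{\<omega>\<in>space M. \<exists>i<(2::nat)^m. W \<omega> (real i * h) \<notin> S} = space M - {\<omega>\<in>space M. \<forall>i\<le>(2::nat)^m - 1. W \<omega> (real i * h) \<in> S}"
    using lt by auto
  then have "measure M {\<omega>\<in>space M. \<exists>i<(2::nat)^m. W \<omega> (real i * h) \<notin> S}
      = 1 - measure M {\<omega>\<in>space M. \<forall>i\<le>(2::nat)^m - 1. W \<omega> (real i * h) \<in> S}"
    using prob_compl[OF grid_event_sets[OF meas]] by simp
  also have "measure M {\<omega>\<in>space M. \<forall>i\<le>(2::nat)^m - 1. W \<omega> (real i * h) \<in> S} = ps K S ((2::nat)^m - 1) w0"
    by (rule avoid_prob[where tt="\<lambda>i. real i * h" and n="(2::nat)^m - 1", OF M meas fidi])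
  finally show ?thesis .
qed

lemma ctmc_grid_fidi:
  assumes X: "ctmc M X lam P x0" and h: "h \<ge> 0"
  shows "measure M {\<omega>\<in>space M. \<forall>i\<le>n. X \<omega> (real i * h) = s i}
       = (if s 0 = x0 then 1 else 0) * (\<Prod>i<n. E P (lam * h) (s i) (s (Suc i)))"
proof -
  have f: "\<forall>(n::nat) (tt::nat \<Rightarrow> real) s.
        tt 0 = 0 \<and> (\<forall>i<n. tt i \<le> tt (Suc i)) \<longrightarrow>
        measure M {\<omega>\<in>space M. \<forall>i\<le>n. X \<omega> (tt i) = s i}
          = (if s 0 = x0 then 1 else 0) *
            (\<Prod>i<n. heat_kernel lam P (tt (Suc i) - tt i) (s i) (s (Suc i)))"
    using X unfolding ctmc_def by blast
  have mono: "\<forall>i<n. real i * h \<le> real (Suc i) * h" using h by (auto intro: mult_right_mono)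
  have d: "(1 + real i) * h - real i * h = h" for i by (simp add: algebra_simps)
  show ?thesis using f[rule_format, of "\<lambda>i. real i * h" n s] mono by (simp add: d heat_kernel_E)
qed

lemma E_zero: "E P 0 = (\<lambda>a b. if a = b then 1 else 0)"
proof (intro ext)
  fix a b
  have "(\<lambda>n. (0::real) ^ n / fact n * matpow P n a b) = (\<lambda>n. if n = 0 then matpow P 0 a b else 0)"
    by (intro ext) simp
  moreover have "(\<lambda>n. if n = 0 then matpow P 0 a b else 0) sums matpow P 0 a b" by (rule sums_single)
  ultimately have "(\<Sum>n. (0::real) ^ n / fact n * matpow P n a b) = matpow P 0 a b" by (simp add: sums_iff)
  then show "E P 0 a b = (if a = b then 1 else 0)" unfolding E_def by simp
qed

lemma ps_id: "ps (\<lambda>a b. if a = b then 1 else 0) (-{z}) n x = (if x \<noteq> z then 1 else 0)"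
proof (induction n arbitrary: x)
  case 0
  then show ?case by simp
next
  case (Suc n)
  have "(\<Sum>c\<in>UNIV. (if x = c then 1 else 0) * ps (\<lambda>a b. if a = b then 1 else 0) (-{z}) n c)
       = ps (\<lambda>a b. if a = b then 1 else 0) (-{z}) n x"
    by (simp add: ind_mult)
  then show ?case using Suc.IH by simp
qed

lemma hit0:
  assumes X: "ctmc M X lam P x0"
  shows "measure M {\<omega>\<in>space M. hitting_time X z \<omega> \<le> ereal 0} = (if z = x0 then 1 else 0)"
proof -
  have rc: "\<forall>\<omega>\<in>space M. \<forall>t\<ge>0. eventually (\<lambda>s. X \<omega> s = X \<omega> t) (at_right t)"
    using X unfolding ctmc_def by blast
  have eq: "{\<omega>\<in>space M. hitting_time X z \<omega> \<le> ereal 0} = {\<omega>\<in>space M. \<forall>i\<le>(0::nat). X \<omega> (real i * 0) = z}"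
  proof (intro equalityI subsetI)
    fix \<omega> assume a: "\<omega> \<in> {\<omega>\<in>space M. hitting_time X z \<omega> \<le> ereal 0}"
    then have sp: "\<omega> \<in> space M" and le: "Inf (ereal ` {t. 0 \<le> t \<and> X \<omega> t = z}) \<le> ereal 0"
      unfolding hitting_time_def by auto
    have "X \<omega> 0 = z"
    proof (rule ccontr)
      assume ne: "X \<omega> 0 \<noteq> z"
      have ev: "eventually (\<lambda>s. X \<omega> s = X \<omega> 0) (at_right 0)" using rc sp by simp
      obtain b where b: "b > 0" and bp: "\<And>y. y > 0 \<Longrightarrow> y < b \<Longrightarrow> X \<omega> y = X \<omega> 0"
        using ev unfolding eventually_at_right_field by blast
      have "ereal b \<le> Inf (ereal ` {t. 0 \<le> t \<and> X \<omega> t = z})"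
      proof (rule Inf_greatest)
        fix y assume "y \<in> ereal ` {t. 0 \<le> t \<and> X \<omega> t = z}"
        then obtain s where s: "0 \<le> s" "X \<omega> s = z" and ys: "y = ereal s" by blast
        have "\<not> s < b"
        proof
          assume "s < b"
          moreover have "s \<noteq> 0" using s ne by auto
          ultimately have "X \<omega> s = X \<omega> 0" using s by (intro bp) auto
          then show False using s ne by simp
        qed
        then show "ereal b \<le> y" using ys by simp
      qed
      then have "ereal b \<le> ereal 0" using le by (rule order_trans)
      then show False using b by simp
    qed
    then show "\<omega> \<in> {\<omega>\<in>space M. \<forall>i\<le>(0::nat). X \<omega> (real i * 0) = z}" using sp by simp
  next
    fix \<omega> assume "\<omega> \<in> {\<omega>\<in>space M. \<forall>i\<le>(0::nat). X \<omega> (real i * 0) = z}"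
    then have sp: "\<omega> \<in> space M" and x: "X \<omega> 0 = z" by auto
    have "Inf (ereal ` {t. 0 \<le> t \<and> X \<omega> t = z}) \<le> ereal 0" using x by (intro Inf_lower) auto
    then show "\<omega> \<in> {\<omega>\<in>space M. hitting_time X z \<omega> \<le> ereal 0}" using sp unfolding hitting_time_def by simp
  qed
  show ?thesis unfolding eq using ctmc_grid_fidi[OF X, of 0 0 "\<lambda>_. z"] by simp
qed



theorem lemma3p5:
  fixes P :: "'a::finite \<Rightarrow> 'a \<Rightarrow> real"
    and lamY lamZ t :: real and x z :: 'a
    and M :: "'w measure" and X :: "'w \<Rightarrow> real \<Rightarrow> 'a"
    and N :: "'v measure" and Y Z :: "'v \<Rightarrow> real \<Rightarrow> 'a"
  assumes "stochastic_matrix P" and "irreducible_chain P"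
    and "reversible_chain P" and "transitive_chain P"
    and "lamY \<ge> 0" and "lamZ \<ge> 0"
    and "ctmc M X 1 P x"
    and "ctmc N Y lamY P x" and "ctmc N Z lamZ P z"
    and "prob_space.indep_var N path_space Y path_space Z"
    and "t \<ge> 0"
  shows "measure M {\<omega>\<in>space M. hitting_time X z \<omega> \<le> ereal ((lamY + lamZ) * t)}
       = measure N {\<omega>\<in>space N. meeting_time Y Z \<omega> \<le> ereal t}"
proof -
  note st = assms(1) and Xc = assms(7) and Yc = assms(8) and Zc = assms(9) and ind = assms(10)
  have Psym: "\<And>a b. P a b = P b a" using P_sym[OF assms(1-4)] by blast
  have tr: "transitive_chain P" by (rule assms(4))
  define L where "L = lamY + lamZ"
  have L0: "L \<ge> 0" unfolding L_def using assms(5,6) by simp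
  define h where "h k m = (t + 1 / real (Suc k)) / 2 ^ m" for k :: nat and m :: nat
  have hpos: "h k m \<ge> 0" for k m unfolding h_def using assms(11) by simp
  define G where "G k m = 1 - ps (E P (L * h k m)) (-{z}) ((2::nat)^m - 1) x" for k m
  have Mp: "prob_space M" and Np: "prob_space N" using Xc Yc unfolding ctmc_def by blast+
  have Xm: "\<And>t. (\<lambda>\<omega>. X \<omega> t) \<in> measurable M (count_space UNIV)" using Xc unfolding ctmc_def by blast
  have Ym: "\<And>t. (\<lambda>\<omega>. Y \<omega> t) \<in> measurable N (count_space UNIV)" using Yc unfolding ctmc_def by blast
  have Zm: "\<And>t. (\<lambda>\<omega>. Z \<omega> t) \<in> measurable N (count_space UNIV)" using Zc unfolding ctmc_def by blast
  have Xr: "\<forall>\<omega>\<in>space M. \<forall>t\<ge>0. eventually (\<lambda>s. X \<omega> s = X \<omega> t) (at_right t)" using Xc unfolding ctmc_def by blast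
  have Yr: "\<forall>\<omega>\<in>space N. \<forall>t\<ge>0. eventually (\<lambda>s. Y \<omega> s = Y \<omega> t) (at_right t)" using Yc unfolding ctmc_def by blast
  have Zr: "\<forall>\<omega>\<in>space N. \<forall>t\<ge>0. eventually (\<lambda>s. Z \<omega> s = Z \<omega> t) (at_right t)" using Zc unfolding ctmc_def by blast
  define W where "W \<omega> s = (Y \<omega> s, Z \<omega> s)" for \<omega> s
  have Wm: "(\<lambda>\<omega>. W \<omega> s) \<in> measurable N (count_space UNIV)" for s
  proof -
    have "(\<lambda>\<omega>. W \<omega> s) -` {p} \<inter> space N \<in> sets N" for p
    proof -
      have "(\<lambda>\<omega>. W \<omega> s) -` {p} \<inter> space N = ((\<lambda>\<omega>. Y \<omega> s) -` {fst p} \<inter> space N) \<inter> ((\<lambda>\<omega>. Z \<omega> s) -` {snd p} \<inter> space N)"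
        unfolding W_def by (auto simp: prod_eq_iff)
      also have "\<dots> \<in> sets N"
        using measurable_sets[OF Ym[of s], of "{fst p}"] measurable_sets[OF Zm[of s], of "{snd p}"] by auto
      finally show ?thesis .
    qed
    then show ?thesis by (subst measurable_count_space_eq2_countable) auto
  qed
  have Wr: "eventually (\<lambda>s. W \<omega> s = W \<omega> t') (at_right t')" if "\<omega> \<in> space N" "t' \<ge> 0" for \<omega> t'
  proof -
    have "eventually (\<lambda>s. Y \<omega> s = Y \<omega> t' \<and> Z \<omega> s = Z \<omega> t') (at_right t')"
      using Yr Zr that by (intro eventually_conj) auto
    then show ?thesis unfolding W_def by (rule eventually_mono) simp
  qed
  have RHSlim: "(\<lambda>k. lim (\<lambda>m. G k m)) \<longlonglongrightarrow> measure N {\<omega>\<in>space N. meeting_time Y Z \<omega> \<le> ereal t}"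
  proof -
    have hl: "(\<lambda>k. lim (\<lambda>m. measure N {\<omega>\<in>space N. \<exists>i<(2::nat)^m. W \<omega> (real i * ((t + 1 / real (Suc k)) / 2^m)) \<notin> {p. fst p \<noteq> snd p}}))
          \<longlonglongrightarrow> measure N {\<omega>\<in>space N. Inf (ereal ` {s. 0 \<le> s \<and> W \<omega> s \<notin> {p. fst p \<noteq> snd p}}) \<le> ereal t}"
      by (rule hit_lim[OF Np Wm Wr assms(11) zero_less_one])
    have e1: "measure N {\<omega>\<in>space N. \<exists>i<(2::nat)^m. W \<omega> (real i * ((t + 1 / real (Suc k)) / 2^m)) \<notin> {p. fst p \<noteq> snd p}}
        = G k m" for k m
    proof -
      have fid: "measure N {\<omega>\<in>space N. \<forall>i\<le>n. W \<omega> (real i * h k m) = s i}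
          = (if s 0 = (x, z) then 1 else 0) *
            (\<Prod>i<n. E P (lamY * h k m) (fst (s i)) (fst (s (Suc i))) * E P (lamZ * h k m) (snd (s i)) (snd (s (Suc i))))" for n s
        unfolding W_def
        by (rule pair_fidi[OF Np ind ctmc_grid_fidi[OF Yc hpos] ctmc_grid_fidi[OF Zc hpos]])
      have "measure N {\<omega>\<in>space N. \<exists>i<(2::nat)^m. W \<omega> (real i * h k m) \<notin> {p. fst p \<noteq> snd p}}
          = 1 - ps (\<lambda>p q. E P (lamY * h k m) (fst p) (fst q) * E P (lamZ * h k m) (snd p) (snd q)) {p. fst p \<noteq> snd p} ((2::nat)^m - 1) (x, z)"
        by (rule grid_prob[OF Np Wm fid])
      also have "\<dots> = 1 - ps (E P (lamY * h k m + lamZ * h k m)) (-{z}) ((2::nat)^m - 1) x"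
        by (simp only: UV[OF st Psym tr])
      also have "lamY * h k m + lamZ * h k m = L * h k m" unfolding L_def by (simp add: algebra_simps)
      finally show ?thesis unfolding G_def h_def .
    qed
    have e2: "{\<omega>\<in>space N. Inf (ereal ` {s. 0 \<le> s \<and> W \<omega> s \<notin> {p. fst p \<noteq> snd p}}) \<le> ereal t}
        = {\<omega>\<in>space N. meeting_time Y Z \<omega> \<le> ereal t}"
      unfolding meeting_time_def W_def by simp
    show ?thesis using hl unfolding e1 e2 .
  qed
  have LHSlim: "(\<lambda>k. lim (\<lambda>m. G k m)) \<longlonglongrightarrow> measure M {\<omega>\<in>space M. hitting_time X z \<omega> \<le> ereal ((lamY + lamZ) * t)}"
  proof (cases "L = 0")
    case True
    have Gc: "G k m = (if x = z then 1 else 0)" for k m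
      unfolding G_def True by (simp add: E_zero ps_id)
    have lc: "lim (\<lambda>m. G k m) = (if x = z then 1 else 0)" for k
      unfolding Gc by (rule limI) simp
    have "measure M {\<omega>\<in>space M. hitting_time X z \<omega> \<le> ereal ((lamY + lamZ) * t)} = (if z = x then 1 else 0)"
      using hit0[OF Xc, of z] True unfolding L_def by simp
    then show ?thesis unfolding lc by auto
  next
    case False
    then have Lp: "L > 0" using L0 by simp
    have ct: "L * t \<ge> 0" using L0 assms(11) by simp
    have hl: "(\<lambda>k. lim (\<lambda>m. measure M {\<omega>\<in>space M. \<exists>i<(2::nat)^m. X \<omega> (real i * ((L * t + L / real (Suc k)) / 2^m)) \<notin> -{z}}))
          \<longlonglongrightarrow> measure M {\<omega>\<in>space M. Inf (ereal ` {s. 0 \<le> s \<and> X \<omega> s \<notin> -{z}}) \<le> ereal (L * t)}"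
      by (rule hit_lim[OF Mp Xm _ ct Lp]) (use Xr in blast)
    have hh: "(L * t + L / real (Suc k)) / 2^m = L * h k m" for k m
      unfolding h_def by (simp add: algebra_simps add_divide_distrib)
    have e1: "measure M {\<omega>\<in>space M. \<exists>i<(2::nat)^m. X \<omega> (real i * ((L * t + L / real (Suc k)) / 2^m)) \<notin> -{z}}
        = G k m" for k m
    proof -
      have hp: "L * h k m \<ge> 0" using L0 hpos by simp
      have "measure M {\<omega>\<in>space M. \<exists>i<(2::nat)^m. X \<omega> (real i * (L * h k m)) \<notin> -{z}}
          = 1 - ps (E P (1 * (L * h k m))) (-{z}) ((2::nat)^m - 1) x"
        by (rule grid_prob[OF Mp Xm ctmc_grid_fidi[OF Xc hp]])
      then show ?thesis unfolding hh G_def by simp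
    qed
    have e2: "{\<omega>\<in>space M. Inf (ereal ` {s. 0 \<le> s \<and> X \<omega> s \<notin> -{z}}) \<le> ereal (L * t)}
        = {\<omega>\<in>space M. hitting_time X z \<omega> \<le> ereal ((lamY + lamZ) * t)}"
      unfolding hitting_time_def L_def by simp
    show ?thesis using hl unfolding e1 e2 .
  qed
  show ?thesis using LIMSEQ_unique[OF LHSlim RHSlim] .
qed

end
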